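(* The category $\mathcal O$ is a full subcategory of the category $\mathcal C^{hi}$; that is, every $\mathbf U(\infty)$-module in $\mathcal O$ lies in $\mathcal C^{hi}$.
   Context: $v$ indeterminate. $\mathbf U(\infty)$ is the $\mathbb Q(v)$-algebra with generators $E_i,F_i,K_i,K_i^{-1}$ ($i\in\mathbb Z$) and relations: $K_iK_j=K_jK_i$, $K_iK_i^{-1}=1$; $K_iE_j=v^{\delta_{i,j}-\delta_{i,j+1}}E_jK_i$; $K_iF_j=v^{\delta_{i,j+1}-\delta_{i,j}}F_jK_i$; $E_iE_j=E_jE_i$, $F_iF_j=F_jF_i$ if $|i-j|>1$; $E_iF_j-F_jE_i=\delta_{i,j}\frac{\widetilde K_i-\widetilde K_i^{-1}}{v-v^{-1}}$, $\widetilde K_i=K_iK_{i+1}^{-1}$; $E_i^2E_j-(v+v^{-1})E_iE_jE_i+E_jE_i^2=0$ and likewise for $F$ if $|i-j|=1$. $X(\infty)$ is the set of all integer sequences $\lambda=(\lambda_i)_{i\in\mathbb Z}$; $\alpha_i=\varepsilon_i-\varepsilon_{i+1}$ ($\varepsilon_i$ the unit sequence); $\mu\le_{wt}\lambda$ iff $\lambda-\mu$ is a finite $\mathbb N$-linear combination of the $\alpha_i$; $(-\infty,\lambda]=\{\mu:\mu\le_{wt}\lambda\}$. For a $\mathbf U(\infty)$-module $M$, $M_\lambda=\{x:K_ix=v^{\lambda_i}x\ \forall i\}$, $\mathrm{wt}(M)=\{\lambda:M_\lambda\ne0\}$; weight module: $M=\bigoplus_\lambda M_\lambda$. $\mathcal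 C^{hi}$: the full subcategory of weight modules $M$ such that for each $x\in M$ there is $n_0$ with $ux=0$ for every monomial $u$ in the $E_i$'s with at least $n_0$ factors. $\mathcal O$: the full subcategory of weight modules with finite-dimensional weight spaces for which there exist finitely many $\lambda^{(1)},\dots,\lambda^{(s)}\in X(\infty)$ with $\mathrm{wt}(M)\subseteq\bigcup_k(-\infty,\lambda^{(k)}]$. *)

theory Defs
  imports Main "HOL-Computational_Algebra.Polynomial" "HOL-Computational_Algebra.Fraction_Field"
begin

type_synonym qv = "rat poly fract"

definition vv :: qv where "vv = Fract [:0, 1:] 1"

definition Uinf_module ::
  "(qv \<Rightarrow> 'm::ab_group_add \<Rightarrow> 'm) \<Rightarrow> (int \<Rightarrow> 'm \<Rightarrow> 'm) \<Rightarrow> (int \<Rightarrow> 'm \<Rightarrow> 'm)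
    \<Rightarrow> (int \<Rightarrow> 'm \<Rightarrow> 'm) \<Rightarrow> (int \<Rightarrow> 'm \<Rightarrow> 'm) \<Rightarrow> bool" where
  "Uinf_module sm E F K Kinv \<longleftrightarrow>
     vector_space sm \<and>
     (\<forall>i. Vector_Spaces.linear sm sm (E i) \<and> Vector_Spaces.linear sm sm (F i) \<and>
          Vector_Spaces.linear sm sm (K i) \<and> Vector_Spaces.linear sm sm (Kinv i)) \<and>
     (\<forall>i j x. K i (K j x) = K j (K i x)) \<and>
     (\<forall>i x. K i (Kinv i x) = x) \<and>
     (\<forall>i j x. K i (E j x) =
        sm (vv powi ((if i = j then 1 else 0) - (if i = j + 1 then 1 else 0))) (E j (K i x))) \<and>
     (\<forall>i j x. K i (F j x) =
        sm (vv powi ((if i = j + 1 then 1 else 0) - (if i = j then 1 else 0))) (F j (K i x))) \<and>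
     (\<forall>i j x. \<bar>i - j\<bar> > 1 \<longrightarrow> E i (E j x) = E j (E i x) \<and> F i (F j x) = F j (F i x)) \<and>
     (\<forall>i j x. E i (F j x) - F j (E i x) =
        (if i = j then sm (inverse (vv - inverse vv))
                         (K i (Kinv (i + 1) x) - K (i + 1) (Kinv i x))
         else 0)) \<and>
     (\<forall>i j x. \<bar>i - j\<bar> = 1 \<longrightarrow>
        E i (E i (E j x)) - sm (vv + inverse vv) (E i (E j (E i x))) + E j (E i (E i x)) = 0 \<and>
        F i (F i (F j x)) - sm (vv + inverse vv) (F i (F j (F i x))) + F j (F i (F i x)) = 0)"

definition weight_space ::
  "(qv \<Rightarrow> 'm \<Rightarrow> 'm) \<Rightarrow> (int \<Rightarrow> 'm \<Rightarrow> 'm) \<Rightarrow> (int \<Rightarrow> int) \<Rightarrow> 'm set" where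
  "weight_space sm K lm = {x. \<forall>i. K i x = sm (vv powi lm i) x}"

definition weights ::
  "(qv \<Rightarrow> 'm::zero \<Rightarrow> 'm) \<Rightarrow> (int \<Rightarrow> 'm \<Rightarrow> 'm) \<Rightarrow> (int \<Rightarrow> int) set" where
  "weights sm K = {lm. \<exists>x \<in> weight_space sm K lm. x \<noteq> 0}"

text \<open>M is a weight module: M is the sum of its weight spaces (the sum is automatically direct).\<close>
definition weight_module ::
  "(qv \<Rightarrow> 'm::ab_group_add \<Rightarrow> 'm) \<Rightarrow> (int \<Rightarrow> 'm \<Rightarrow> 'm) \<Rightarrow> bool" where
  "weight_module sm K \<longleftrightarrow>
     (\<forall>x. \<exists>L f. finite L \<and> (\<forall>lm\<in>L. f lm \<in> weight_space sm K lm) \<and> x = (\<Sum>lm\<in>L. f lm))"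

text \<open>mu <=wt lambda iff lambda - mu = sum of c_i alpha_i, c finitely supported, c_i in N,
  alpha_i = eps_i - eps_(i+1); the j-th entry of that sum is c_j - c_(j-1).\<close>
definition wt_le :: "(int \<Rightarrow> int) \<Rightarrow> (int \<Rightarrow> int) \<Rightarrow> bool" where
  "wt_le mu lm \<longleftrightarrow>
     (\<exists>c :: int \<Rightarrow> nat. finite {i. c i \<noteq> 0} \<and> (\<forall>j. lm j - mu j = int (c j) - int (c (j - 1))))"

definition Emon :: "(int \<Rightarrow> 'm \<Rightarrow> 'm) \<Rightarrow> int list \<Rightarrow> 'm \<Rightarrow> 'm" where
  "Emon E is x = foldr E is x"

definition in_C_hi ::
  "(qv \<Rightarrow> 'm::ab_group_add \<Rightarrow> 'm) \<Rightarrow> (int \<Rightarrow> 'm \<Rightarrow> 'm) \<Rightarrow> (int \<Rightarrow> 'm \<Rightarrow> 'm) \<Rightarrow> bool" where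
  "in_C_hi sm E K \<longleftrightarrow> weight_module sm K \<and>
     (\<forall>x. \<exists>n0::nat. \<forall>is. length is \<ge> n0 \<longrightarrow> Emon E is x = 0)"

definition fin_dim_subspace :: "(qv \<Rightarrow> 'm::ab_group_add \<Rightarrow> 'm) \<Rightarrow> 'm set \<Rightarrow> bool" where
  "fin_dim_subspace sm S \<longleftrightarrow> (\<exists>B. finite B \<and> B \<subseteq> S \<and> S \<subseteq> module.span sm B)"

definition in_O ::
  "(qv \<Rightarrow> 'm::ab_group_add \<Rightarrow> 'm) \<Rightarrow> (int \<Rightarrow> 'm \<Rightarrow> 'm) \<Rightarrow> bool" where
  "in_O sm K \<longleftrightarrow> weight_module sm K \<and>
     (\<forall>lm. fin_dim_subspace sm (weight_space sm K lm)) \<and>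
     (\<exists>Lam. finite Lam \<and> weights sm K \<subseteq> (\<Union>lm\<in>Lam. {mu. wt_le mu lm}))"

end

theory Submission
  imports Defs
begin

lemma vv_nz: "vv \<noteq> 0"
  unfolding vv_def by (simp add: Zero_fract_def eq_fract)

lemma lin_add: "Vector_Spaces.linear sm sm f \<Longrightarrow> f (x + y) = f x + f y"
  by (simp add: Vector_Spaces.linear_iff)

lemma lin_scale: "Vector_Spaces.linear sm sm f \<Longrightarrow> f (sm c x) = sm c (f x)"
  by (simp add: Vector_Spaces.linear_iff)

lemma lin_zero: "Vector_Spaces.linear sm sm f \<Longrightarrow> f 0 = (0::'m::ab_group_add)"
proof -
  assume l: "Vector_Spaces.linear sm sm f"
  have "f (0 + 0) = f 0 + f 0" using lin_add[OF l] .
  thus ?thesis by simp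
qed

lemma lin_sum:
  assumes l: "Vector_Spaces.linear sm sm f" and fin: "finite A"
  shows "f (\<Sum>a\<in>A. g a) = (\<Sum>a\<in>A. f (g a))"
  using fin by (induction A rule: finite_induct) (simp_all add: lin_zero[OF l] lin_add[OF l])

lemma weight_E:
  assumes U: "Uinf_module sm E F K Kinv"
    and x: "x \<in> weight_space sm K mu"
  shows "E j x \<in> weight_space sm K
           (\<lambda>i. mu i + ((if i = j then 1 else 0) - (if i = j + 1 then 1 else 0)))"
proof -
  have vs: "vector_space sm" and lE: "Vector_Spaces.linear sm sm (E j)"
    and rel: "\<And>i. K i (E j x) =
        sm (vv powi ((if i = j then 1 else 0) - (if i = j + 1 then 1 else 0))) (E j (K i x))"
    using U unfolding Uinf_module_def by auto
  show ?thesis unfolding weight_space_def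
  proof (clarify)
    fix i
    have "K i (E j x) = sm (vv powi ((if i = j then 1 else 0) - (if i = j + 1 then 1 else 0)))
              (E j (sm (vv powi mu i) x))"
      using rel x unfolding weight_space_def by simp
    also have "\<dots> = sm (vv powi ((if i = j then 1 else 0) - (if i = j + 1 then 1 else 0)))
              (sm (vv powi mu i) (E j x))"
      using lin_scale[OF lE] by simp
    also have "\<dots> = sm (vv powi ((if i = j then 1 else 0) - (if i = j + 1 then 1 else 0)) * vv powi mu i) (E j x)"
      using vs by (simp add: vector_space_def module_def)
    also have "\<dots> = sm (vv powi (mu i + ((if i = j then 1 else 0) - (if i = j + 1 then 1 else 0)))) (E j x)"
      using power_int_add[of vv] vv_nz by (simp add: mult.commute add.commute)
    finally show "K i (E j x) = sm (vv powi (mu i + ((if i = j then 1 else 0) - (if i = j + 1 then 1 else 0)))) (E j x)" .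
  qed
qed

lemma weight_Emon:
  assumes U: "Uinf_module sm E F K Kinv"
    and x: "x \<in> weight_space sm K mu"
  shows "Emon E is x \<in> weight_space sm K
           (\<lambda>i. mu i + int (count_list is i) - int (count_list is (i - 1)))"
proof (induction "is")
  case Nil
  then show ?case using x by (simp add: Emon_def)
next
  case (Cons j "is")
  have e: "Emon E (j # is) x = E j (Emon E is x)" by (simp add: Emon_def)
  have eq: "(\<lambda>i. mu i + int (count_list is i) - int (count_list is (i - 1))
        + ((if i = j then 1 else 0) - (if i = j + 1 then 1 else 0)))
     = (\<lambda>i. mu i + int (count_list (j # is) i) - int (count_list (j # is) (i - 1)))"
    by (rule ext) auto
  show ?case unfolding e
    using weight_E[OF U Cons.IH, of j] unfolding eq[symmetric] by simp
qed

lemma Emon_sum: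
  assumes U: "Uinf_module sm E F K Kinv" and fin: "finite L"
  shows "Emon E is (\<Sum>l\<in>L. f l) = (\<Sum>l\<in>L. Emon E is (f l))"
proof (induction "is")
  case Nil
  then show ?case by (simp add: Emon_def)
next
  case (Cons j "is")
  have lE: "Vector_Spaces.linear sm sm (E j)" using U unfolding Uinf_module_def by auto
  show ?case using Cons fin lin_sum[OF lE fin] by (simp add: Emon_def)
qed

lemma const_zero:
  fixes e :: "int \<Rightarrow> int"
  assumes fin: "finite {i. e i \<noteq> 0}" and st: "\<And>j. e j = e (j - 1)"
  shows "e = (\<lambda>_. 0)"
proof -
  have up: "e (k + int n) = e k" for k n
  proof (induction n)
    case 0
    then show ?case by simp
  next
    case (Suc n)
    have "e (k + int (Suc n)) = e (k + int (Suc n) - 1)" by (rule st)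
    also have "k + int (Suc n) - 1 = k + int n" by simp
    finally show ?case using Suc.IH by simp
  qed
  have all: "e j = e 0" for j
  proof (cases "j \<ge> 0")
    case True
    then show ?thesis using up[of 0 "nat j"] by simp
  next
    case False
    then show ?thesis using up[of j "nat (- j)"] by simp
  qed
  show ?thesis
  proof (rule ccontr)
    assume "e \<noteq> (\<lambda>_. 0)"
    then obtain j where j: "e j \<noteq> 0" by auto
    have "{i. e i \<noteq> 0} = UNIV" using all j by (metis (mono_tags) UNIV_eq_I mem_Collect_eq)
    with fin show False using infinite_UNIV_int by simp
  qed
qed

lemma diff_unique:
  fixes d d' :: "int \<Rightarrow> nat"
  assumes "finite {i. d i \<noteq> 0}" "finite {i. d' i \<noteq> 0}"
    and "\<And>j. int (d j) - int (d (j - 1)) = int (d' j) - int (d' (j - 1))"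
  shows "d = d'"
proof -
  define e where "e = (\<lambda>i. int (d i) - int (d' i))"
  have "{i. e i \<noteq> 0} \<subseteq> {i. d i \<noteq> 0} \<union> {i. d' i \<noteq> 0}" unfolding e_def by auto
  hence "finite {i. e i \<noteq> 0}" using assms(1,2) by (meson finite_Un finite_subset)
  moreover have "e j = e (j - 1)" for j unfolding e_def using assms(3)[of j] by linarith
  ultimately have "e = (\<lambda>_. 0)" by (rule const_zero)
  hence "e i = 0" for i by simp
  hence "d i = d' i" for i unfolding e_def by simp
  thus ?thesis by (rule ext)
qed

definition Dpred :: "(int \<Rightarrow> int) \<Rightarrow> (int \<Rightarrow> int) \<Rightarrow> (int \<Rightarrow> nat) \<Rightarrow> bool" where
  "Dpred lm mu d \<longleftrightarrow> finite {i. d i \<noteq> 0} \<and> (\<forall>j. lm j - mu j = int (d j) - int (d (j - 1)))"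

definition Ht :: "(int \<Rightarrow> int) \<Rightarrow> (int \<Rightarrow> int) \<Rightarrow> nat" where
  "Ht lm mu = (let d = (THE d. Dpred lm mu d) in sum d {i. d i \<noteq> 0})"

lemma length_bound:
  assumes "wt_le (\<lambda>i. mu i + int (count_list is i) - int (count_list is (i - 1))) lm"
  shows "length is \<le> Ht lm mu"
proof -
  obtain c :: "int \<Rightarrow> nat" where cf: "finite {i. c i \<noteq> 0}"
    and cd: "\<And>j. lm j - (mu j + int (count_list is j) - int (count_list is (j - 1)))
                 = int (c j) - int (c (j - 1))"
    using assms unfolding wt_le_def by blast
  define d where "d = (\<lambda>i. c i + count_list is i)"
  have "{i. d i \<noteq> 0} \<subseteq> {i. c i \<noteq> 0} \<union> set is"
    unfolding d_def using count_notin by fastforce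
  hence df: "finite {i. d i \<noteq> 0}" using cf by (meson finite_Un finite_subset List.finite_set)
  have Dd: "Dpred lm mu d" unfolding Dpred_def d_def using df cd
    by (auto simp: d_def algebra_simps)
  have the: "(THE d. Dpred lm mu d) = d"
  proof (rule the_equality[where P="Dpred lm mu", OF Dd])
    fix d' assume "Dpred lm mu d'"
    thus "d' = d" using Dd unfolding Dpred_def by (intro diff_unique) auto
  qed
  have sub: "set is \<subseteq> {i. d i \<noteq> 0}" unfolding d_def
    using count_list_0_iff by fastforce
  have "length is = sum (count_list is) (set is)"
    by (rule sum_count_set[symmetric]) auto
  also have "\<dots> \<le> sum d (set is)" by (rule sum_mono) (simp add: d_def)
  also have "\<dots> \<le> sum d {i. d i \<noteq> 0}" by (rule sum_mono2[OF df sub]) simp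
  finally show ?thesis unfolding Ht_def the Let_def .
qed

theorem proposition9p2:
  fixes sm :: "qv \<Rightarrow> 'm::ab_group_add \<Rightarrow> 'm"
    and E F K Kinv :: "int \<Rightarrow> 'm \<Rightarrow> 'm"
  assumes "Uinf_module sm E F K Kinv"
    and "in_O sm K"
  shows "in_C_hi sm E K"
proof -
  have wm: "weight_module sm K" using assms(2) unfolding in_O_def by auto
  obtain Lam where Lf: "finite Lam"
    and Lw: "weights sm K \<subseteq> (\<Union>lm\<in>Lam. {mu. wt_le mu lm})"
    using assms(2) unfolding in_O_def by auto
  have "\<exists>n0::nat. \<forall>is. length is \<ge> n0 \<longrightarrow> Emon E is x = 0" for x
  proof -
    obtain L f where Lfin: "finite L" and fw: "\<forall>lm\<in>L. f lm \<in> weight_space sm K lm"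
      and xs: "x = (\<Sum>lm\<in>L. f lm)"
      using wm unfolding weight_module_def by blast
    define N where "N = Suc (\<Sum>p\<in>L \<times> Lam. Ht (snd p) (fst p))"
    show ?thesis
    proof (intro exI allI impI)
      fix "is" :: "int list" assume len: "N \<le> length is"
      have "Emon E is (f mu) = 0" if mu: "mu \<in> L" for mu
      proof (rule ccontr)
        assume nz: "Emon E is (f mu) \<noteq> 0"
        have "Emon E is (f mu) \<in> weight_space sm K
           (\<lambda>i. mu i + int (count_list is i) - int (count_list is (i - 1)))"
          using weight_Emon[OF assms(1)] fw mu by blast
        hence "(\<lambda>i. mu i + int (count_list is i) - int (count_list is (i - 1))) \<in> weights sm K"
          using nz unfolding weights_def by blast
        then obtain lm where lm: "lm \<in> Lam"
          and "wt_le (\<lambda>i. mu i + int (count_list is i) - int (count_list is (i - 1))) lm"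
          using Lw by blast
        hence "length is \<le> Ht lm mu" using length_bound by blast
        also have "\<dots> \<le> (\<Sum>p\<in>L \<times> Lam. Ht (snd p) (fst p))"
          using member_le_sum[of "(mu, lm)" "L \<times> Lam" "\<lambda>p. Ht (snd p) (fst p)"] mu lm Lfin Lf
          by simp
        finally show False using len unfolding N_def by simp
      qed
      then show "Emon E is x = 0"
        unfolding xs Emon_sum[OF assms(1) Lfin] by simp
    qed
  qed
  with wm show ?thesis unfolding in_C_hi_def by blast
qed

end
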